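(* Let $G$ be a connected graph with $n\ge2$ nodes and diameter $D$, with nonnegative integer loads, and run Algorithm 2. If the discrepancy of $G$ at the beginning of some round is $K\ge 2D$, then after that round the potential $p(G)$ has decreased by at least $K^2/(8D)$.
   Context: $G=(V,E)$ is an undirected connected graph, $n=|V|$, $D$ its diameter; each node $u$ holds an integer load $load(u)\ge 0$. $L_{max},L_{min}$ denote the current maximum and minimum load, the discrepancy is $K=L_{max}-L_{min}$, $L_{avg}$ the average load (invariant under transfers), and the potential is $p(G)=\sum_{u\in V}(load(u)-L_{avg})^2$. Algorithm 2 (single proposal, discrete) proceeds in synchronous rounds; in each round, using the loads at the start of the round: (1) every node $u$ having at least one neighbor $v$ with $load(v)\le load(u)-2$ picks the first neighbor $v$ (in a fixed order of its neighbors) maximizing $load(u)-load(v)$ and sends $v$ a proposal of value $p_{uv}=\lfloor (load(u)-load(v))/2\rfloor$; (2) every node that received at least one proposal accepts exactly one proposal of maximum value; (3) all accepted transfers are executed simultaneously (each accepted proposal $p_{wu}$ moves $p_{wu}$ from $w$ to $u$), and nodes report their new loads to neighbors. *)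

theory Defs
  imports Complex_Main
begin

definition is_graph :: "'a set \<Rightarrow> ('a \<Rightarrow> 'a \<Rightarrow> bool) \<Rightarrow> bool" where
  "is_graph V E \<longleftrightarrow> finite V \<and> (\<forall>u v. E u v \<longrightarrow> u \<in> V \<and> v \<in> V) \<and>
     (\<forall>u v. E u v \<longrightarrow> E v u) \<and> (\<forall>u. \<not> E u u)"

definition walk :: "'a set \<Rightarrow> ('a \<Rightarrow> 'a \<Rightarrow> bool) \<Rightarrow> 'a \<Rightarrow> 'a \<Rightarrow> nat \<Rightarrow> bool" where
  "walk V E u v k \<longleftrightarrow> (\<exists>xs. length xs = Suc k \<and> hd xs = u \<and> last xs = v \<and> set xs \<subseteq> V \<and>
      (\<forall>i < k. E (xs ! i) (xs ! Suc i)))"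

definition connected_graph :: "'a set \<Rightarrow> ('a \<Rightarrow> 'a \<Rightarrow> bool) \<Rightarrow> bool" where
  "connected_graph V E \<longleftrightarrow> (\<forall>u\<in>V. \<forall>v\<in>V. \<exists>k. walk V E u v k)"

definition gdist :: "'a set \<Rightarrow> ('a \<Rightarrow> 'a \<Rightarrow> bool) \<Rightarrow> 'a \<Rightarrow> 'a \<Rightarrow> nat" where
  "gdist V E u v = (LEAST k. walk V E u v k)"

definition diameter :: "'a set \<Rightarrow> ('a \<Rightarrow> 'a \<Rightarrow> bool) \<Rightarrow> nat" where
  "diameter V E = Max {gdist V E u v | u v. u \<in> V \<and> v \<in> V}"

definition nbr_order :: "'a set \<Rightarrow> ('a \<Rightarrow> 'a \<Rightarrow> bool) \<Rightarrow> ('a \<Rightarrow> 'a list) \<Rightarrow> bool" where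
  "nbr_order V E nb \<longleftrightarrow> (\<forall>u\<in>V. distinct (nb u) \<and> set (nb u) = {v. E u v})"

(* Step (1): the neighbour u sends its proposal to, if any: the first neighbour
   (in the fixed order) maximizing l u - l v, provided some neighbour v has l v <= l u - 2. *)
definition target :: "('a \<Rightarrow> 'a list) \<Rightarrow> ('a \<Rightarrow> int) \<Rightarrow> 'a \<Rightarrow> 'a option" where
  "target nb l u =
     (if \<exists>v\<in>set (nb u). l v \<le> l u - 2
      then find (\<lambda>v. \<forall>w\<in>set (nb u). l u - l w \<le> l u - l v) (nb u)
      else None)"

definition pval :: "('a \<Rightarrow> int) \<Rightarrow> 'a \<Rightarrow> 'a \<Rightarrow> int" where
  "pval l u v = \<lfloor>real_of_int (l u - l v) / 2\<rfloor>"

(* Step (2): acc v = Some w means v accepts the proposal of w; acc v = None means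
   v received no proposal. Any tie-breaking among maximum-value proposals is allowed. *)
definition valid_accept :: "'a set \<Rightarrow> ('a \<Rightarrow> 'a list) \<Rightarrow> ('a \<Rightarrow> int) \<Rightarrow> ('a \<Rightarrow> 'a option) \<Rightarrow> bool" where
  "valid_accept V nb l acc \<longleftrightarrow>
     (\<forall>v\<in>V. (acc v \<noteq> None \<longleftrightarrow> (\<exists>u\<in>V. target nb l u = Some v)) \<and>
        (\<forall>w. acc v = Some w \<longrightarrow> w \<in> V \<and> target nb l w = Some v \<and>
             (\<forall>u\<in>V. target nb l u = Some v \<longrightarrow> pval l u v \<le> pval l w v)))"

definition round_step :: "('a \<Rightarrow> 'a list) \<Rightarrow> ('a \<Rightarrow> int) \<Rightarrow> ('a \<Rightarrow> 'a option) \<Rightarrow> 'a \<Rightarrow> int" where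
  "round_step nb l acc x =
     l x + (case acc x of Some w \<Rightarrow> pval l w x | None \<Rightarrow> 0)
         - (case target nb l x of Some v \<Rightarrow> (if acc v = Some x then pval l x v else 0) | None \<Rightarrow> 0)"

definition avg_load :: "'a set \<Rightarrow> ('a \<Rightarrow> int) \<Rightarrow> real" where
  "avg_load V l = (\<Sum>u\<in>V. real_of_int (l u)) / real (card V)"

definition potential :: "'a set \<Rightarrow> ('a \<Rightarrow> int) \<Rightarrow> real" where
  "potential V l = (\<Sum>u\<in>V. (real_of_int (l u) - avg_load V l)\<^sup>2)"

definition discrepancy :: "'a set \<Rightarrow> ('a \<Rightarrow> int) \<Rightarrow> int" where
  "discrepancy V l = Max (l ` V) - Min (l ` V)"

end

theory Submission
  imports Defs
begin

lemma pval_div: "pval l u v = (l u - l v) div 2"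
  unfolding pval_def using floor_divide_of_int_eq[of "l u - l v" 2] by simp

lemma target_some:
  assumes "target nb l u = Some t"
  shows "t \<in> set (nb u) \<and> l t \<le> l u - 2 \<and> (\<forall>w\<in>set (nb u). l t \<le> l w)"
proof -
  have ex: "\<exists>v\<in>set (nb u). l v \<le> l u - 2"
    using assms unfolding target_def by (auto split: if_splits)
  hence f: "find (\<lambda>v. \<forall>w\<in>set (nb u). l u - l w \<le> l u - l v) (nb u) = Some t"
    using assms unfolding target_def by auto
  then have "t \<in> set (nb u) \<and> (\<forall>w\<in>set (nb u). l u - l w \<le> l u - l t)"
    unfolding find_Some_iff by auto
  with ex show ?thesis by force
qed

lemma target_exists:
  assumes "v \<in> set (nb u)" "l v \<le> l u - 2"
  shows "\<exists>t. target nb l u = Some t"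
proof -
  have fin: "finite (l ` set (nb u))" by simp
  have ne: "l ` set (nb u) \<noteq> {}" using assms by auto
  obtain m where m: "m \<in> set (nb u)" "l m = Min (l ` set (nb u))"
    using Min_in[OF fin ne] by auto
  have "\<forall>w\<in>set (nb u). l u - l w \<le> l u - l m" using m fin by auto
  hence "find (\<lambda>v. \<forall>w\<in>set (nb u). l u - l w \<le> l u - l v) (nb u) \<noteq> None"
    using m(1) unfolding find_None_iff by blast
  thus ?thesis using assms unfolding target_def by auto
qed

lemma in_sum:
  assumes "finite V" "valid_accept V nb l acc" "v \<in> V"
  shows "(case acc v of Some w \<Rightarrow> F w v | None \<Rightarrow> (0::int)) = (\<Sum>w\<in>V. if acc v = Some w then F w v else 0)"
proof (cases "acc v")
  case None thus ?thesis by simp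
next
  case (Some w0)
  have "w0 \<in> V" using assms Some unfolding valid_accept_def by auto
  have "(\<Sum>w\<in>V. if acc v = Some w then F w v else 0) = (\<Sum>w\<in>V. if w = w0 then F w0 v else 0)"
    by (rule sum.cong) (auto simp: Some)
  also have "\<dots> = F w0 v" using \<open>w0 \<in> V\<close> assms(1) by simp
  finally show ?thesis using Some by simp
qed

lemma acc_target:
  assumes "valid_accept V nb l acc" "v \<in> V" "acc v = Some w"
  shows "w \<in> V \<and> target nb l w = Some v"
  using assms unfolding valid_accept_def by auto

lemma out_sum:
  assumes "is_graph V E" "nbr_order V E nb" "valid_accept V nb l acc" "x \<in> V"
  shows "(case target nb l x of Some v \<Rightarrow> (if acc v = Some x then G x v else 0) | None \<Rightarrow> (0::int))
         = (\<Sum>v\<in>V. if acc v = Some x then G x v else 0)"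
proof (cases "target nb l x")
  case None
  have "(\<Sum>v\<in>V. if acc v = Some x then G x v else 0) = (\<Sum>v\<in>V. 0)"
    by (rule sum.cong) (use None acc_target[OF assms(3)] in fastforce)+
  thus ?thesis using None by simp
next
  case (Some v0)
  have "v0 \<in> set (nb x)" using target_some[OF Some] by simp
  hence "E x v0" using assms(2,4) unfolding nbr_order_def by auto
  hence v0V: "v0 \<in> V" using assms(1) unfolding is_graph_def by auto
  have "(\<Sum>v\<in>V. if acc v = Some x then G x v else 0) = (\<Sum>v\<in>V. if v = v0 then (if acc v0 = Some x then G x v0 else 0) else 0)"
    by (rule sum.cong) (use Some acc_target[OF assms(3)] in fastforce)+
  also have "\<dots> = (if acc v0 = Some x then G x v0 else 0)"
    using v0V assms(1) unfolding is_graph_def by simp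
  finally show ?thesis using Some by simp
qed

lemma sq_bound:
  fixes x a b :: int
  assumes "a \<ge> 0" "b \<ge> 0"
  shows "(x + a - b)^2 \<le> x^2 + (2*x*a + a^2) - (2*x*b - b^2)"
proof -
  have "(x + a - b)^2 = x^2 + (2*x*a + a^2) - (2*x*b - b^2) - 2*a*b"
    by (simp add: power2_eq_square algebra_simps)
  moreover have "a*b \<ge> 0" using assms by simp
  ultimately show ?thesis by linarith
qed

lemma decrease:
  assumes G: "is_graph V E" and NB: "nbr_order V E nb" and VA: "valid_accept V nb l acc"
  defines "h \<equiv> \<lambda>v. case acc v of Some w \<Rightarrow> 2 * pval l w v * (l w - l v - pval l w v) | None \<Rightarrow> 0"
  shows "(\<Sum>x\<in>V. round_step nb l acc x) = (\<Sum>x\<in>V. l x)"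
    and "(\<Sum>x\<in>V. (round_step nb l acc x)^2) + (\<Sum>v\<in>V. h v) \<le> (\<Sum>x\<in>V. (l x)^2)"
proof -
  have fin: "finite V" using G unfolding is_graph_def by auto
  define IN where "IN x = (case acc x of Some w \<Rightarrow> pval l w x | None \<Rightarrow> 0)" for x
  define OUT where "OUT x = (case target nb l x of Some v \<Rightarrow> (if acc v = Some x then pval l x v else 0) | None \<Rightarrow> 0)" for x
  define S where "S F = (\<Sum>v\<in>V. \<Sum>w\<in>V. if acc v = Some w then F w v else (0::int))" for F
  have rs: "round_step nb l acc x = l x + IN x - OUT x" for x
    unfolding round_step_def IN_def OUT_def by simp
  have INnn: "IN x \<ge> 0" if "x \<in> V" for x
  proof (cases "acc x")
    case (Some w)
    then have "target nb l w = Some x" using acc_target[OF VA that] by auto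
    then have "l x \<le> l w - 2" using target_some by fastforce
    thus ?thesis unfolding IN_def Some by (simp add: pval_div)
  qed (simp add: IN_def)
  have OUTnn: "OUT x \<ge> 0" for x
  proof (cases "target nb l x")
    case (Some v)
    then have "l v \<le> l x - 2" using target_some by fastforce
    thus ?thesis unfolding OUT_def Some by (simp add: pval_div)
  qed (simp add: OUT_def)
  have swap: "(\<Sum>x\<in>V. \<Sum>v\<in>V. if acc v = Some x then G x v else 0) = S G" for G
    unfolding S_def by (rule sum.swap)
  have sIN: "(\<Sum>x\<in>V. IN x) = S (pval l)"
    unfolding S_def IN_def by (rule sum.cong) (auto intro: in_sum[OF fin VA])
  have sOUT: "(\<Sum>x\<in>V. OUT x) = S (pval l)"
    unfolding swap[symmetric] OUT_def by (rule sum.cong) (auto intro: out_sum[OF G NB VA])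
  show "(\<Sum>x\<in>V. round_step nb l acc x) = (\<Sum>x\<in>V. l x)"
    unfolding rs using sIN sOUT by (simp add: sum.distrib sum_subtractf)
  define F1 where "F1 w v = 2 * l v * pval l w v + (pval l w v)^2" for w v
  define F2 where "F2 w v = 2 * l w * pval l w v - (pval l w v)^2" for w v
  define H where "H w v = 2 * pval l w v * (l w - l v - pval l w v)" for w v
  have sA: "(\<Sum>x\<in>V. 2 * l x * IN x + (IN x)^2) = S F1"
    unfolding S_def
  proof (rule sum.cong)
    fix x assume "x \<in> V"
    have "2 * l x * IN x + (IN x)^2 = (case acc x of Some w \<Rightarrow> F1 w x | None \<Rightarrow> 0)"
      unfolding IN_def F1_def by (cases "acc x") auto
    thus "2 * l x * IN x + (IN x)^2 = (\<Sum>w\<in>V. if acc x = Some w then F1 w x else 0)"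
      using in_sum[OF fin VA \<open>x \<in> V\<close>] by simp
  qed simp
  have sB: "(\<Sum>x\<in>V. 2 * l x * OUT x - (OUT x)^2) = S F2"
    unfolding swap[symmetric]
  proof (rule sum.cong)
    fix x assume "x \<in> V"
    have "2 * l x * OUT x - (OUT x)^2 = (case target nb l x of Some v \<Rightarrow> (if acc v = Some x then F2 x v else 0) | None \<Rightarrow> 0)"
      unfolding OUT_def F2_def by (cases "target nb l x") auto
    thus "2 * l x * OUT x - (OUT x)^2 = (\<Sum>v\<in>V. if acc v = Some x then F2 x v else 0)"
      using out_sum[OF G NB VA \<open>x \<in> V\<close>] by simp
  qed simp
  have sH: "(\<Sum>v\<in>V. h v) = S H"
    unfolding S_def h_def H_def by (rule sum.cong) (auto intro: in_sum[OF fin VA])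
  have comb: "S F1 - S F2 + S H = 0"
  proof -
    have "S F1 - S F2 + S H = (\<Sum>v\<in>V. \<Sum>w\<in>V. if acc v = Some w then F1 w v - F2 w v + H w v else 0)"
      unfolding S_def by (simp add: sum.distrib[symmetric] sum_subtractf[symmetric] if_distrib, rule sum.cong, simp, rule sum.cong, auto)
    also have "\<dots> = 0"
      by (intro sum.neutral ballI) (simp add: F1_def F2_def H_def power2_eq_square algebra_simps)
    finally show ?thesis .
  qed
  have "(\<Sum>x\<in>V. (round_step nb l acc x)^2) \<le> (\<Sum>x\<in>V. (l x)^2 + (2 * l x * IN x + (IN x)^2) - (2 * l x * OUT x - (OUT x)^2))"
    unfolding rs by (rule sum_mono) (use INnn OUTnn sq_bound in auto)
  also have "\<dots> = (\<Sum>x\<in>V. (l x)^2) + S F1 - S F2"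
    using sA sB by (simp add: sum.distrib sum_subtractf)
  finally show "(\<Sum>x\<in>V. (round_step nb l acc x)^2) + (\<Sum>v\<in>V. h v) \<le> (\<Sum>x\<in>V. (l x)^2)"
    using sH comb by linarith
qed

lemma pot_diff:
  assumes "finite V" and "(\<Sum>x\<in>V. l' x) = (\<Sum>x\<in>V. l x)"
  shows "potential V l - potential V l' = real_of_int ((\<Sum>x\<in>V. (l x)^2) - (\<Sum>x\<in>V. (l' x)^2))"
proof -
  have ex: "potential V f = (\<Sum>u\<in>V. (real_of_int (f u))^2) - 2 * avg_load V f * (\<Sum>u\<in>V. real_of_int (f u))
            + real (card V) * (avg_load V f)^2" for f :: "'a \<Rightarrow> int"
  proof -
    have "potential V f = (\<Sum>u\<in>V. (real_of_int (f u))^2 - 2 * avg_load V f * real_of_int (f u) + (avg_load V f)^2)"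
      unfolding potential_def by (rule sum.cong) (simp_all add: power2_eq_square algebra_simps)
    also have "\<dots> = (\<Sum>u\<in>V. (real_of_int (f u))^2) - 2 * avg_load V f * (\<Sum>u\<in>V. real_of_int (f u))
            + real (card V) * (avg_load V f)^2"
      by (simp add: sum.distrib sum_subtractf sum_distrib_left)
    finally show ?thesis .
  qed
  have s: "(\<Sum>u\<in>V. real_of_int (l' u)) = (\<Sum>u\<in>V. real_of_int (l u))"
    using assms(2) by (metis of_int_sum)
  hence a: "avg_load V l' = avg_load V l" unfolding avg_load_def by simp
  show ?thesis unfolding ex[of l] ex[of l'] s a by (simp add: of_int_sum)
qed

fun layer :: "('a \<Rightarrow> 'a \<Rightarrow> bool) \<Rightarrow> 'a \<Rightarrow> nat \<Rightarrow> 'a set" where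
  "layer E u 0 = {u}"
| "layer E u (Suc j) = layer E u j \<union> {v. \<exists>z\<in>layer E u j. E z v}"

lemma layer_mono: "i \<le> j \<Longrightarrow> layer E u i \<subseteq> layer E u j"
  by (induction j) (auto simp: le_Suc_eq)

lemma layer_sub: "is_graph V E \<Longrightarrow> u \<in> V \<Longrightarrow> layer E u j \<subseteq> V"
  by (induction j) (auto simp: is_graph_def)

lemma layer_ne: "u \<in> layer E u j"
  using layer_mono[of 0 j E u] by auto

lemma walk_layer:
  assumes "walk V E u v k"
  shows "v \<in> layer E u k"
proof -
  obtain xs where xs: "length xs = Suc k" "hd xs = u" "last xs = v" "\<forall>i < k. E (xs ! i) (xs ! Suc i)"
    using assms unfolding walk_def by auto
  have "\<forall>i\<le>k. xs ! i \<in> layer E u i"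
  proof (intro allI impI)
    fix i assume "i \<le> k"
    thus "xs ! i \<in> layer E u i"
    proof (induction i)
      case 0
      have "xs \<noteq> []" using xs(1) by auto
      thus ?case using xs(2) by (simp add: hd_conv_nth)
    next
      case (Suc i)
      hence "xs ! i \<in> layer E u i" by simp
      moreover have "E (xs ! i) (xs ! Suc i)" using xs(4) Suc.prems by simp
      ultimately show ?case by auto
    qed
  qed
  moreover have "last xs = xs ! k"
  proof -
    have "xs \<noteq> []" using xs(1) by auto
    thus ?thesis using xs(1) by (simp add: last_conv_nth)
  qed
  ultimately show ?thesis using xs(3) by auto
qed

lemma layer_all:
  assumes G: "is_graph V E" and C: "connected_graph V E" and u: "u \<in> V"
  shows "layer E u (diameter V E) = V"
proof
  show "layer E u (diameter V E) \<subseteq> V" using layer_sub[OF G u] .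
  show "V \<subseteq> layer E u (diameter V E)"
  proof
    fix v assume v: "v \<in> V"
    then obtain k where "walk V E u v k" using C u unfolding connected_graph_def by blast
    hence w: "walk V E u v (gdist V E u v)" unfolding gdist_def by (rule LeastI)
    have fin: "finite V" using G unfolding is_graph_def by auto
    have "{gdist V E u v |u v. u \<in> V \<and> v \<in> V} = (\<lambda>(u,v). gdist V E u v) ` (V \<times> V)" by auto
    hence "finite {gdist V E u v |u v. u \<in> V \<and> v \<in> V}" using fin by simp
    moreover have "gdist V E u v \<in> {gdist V E u v |u v. u \<in> V \<and> v \<in> V}" using u v by blast
    ultimately have "gdist V E u v \<le> diameter V E" unfolding diameter_def
      by (rule Max_ge)
    hence "layer E u (gdist V E u v) \<subseteq> layer E u (diameter V E)" by (rule layer_mono)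
    thus "v \<in> layer E u (diameter V E)" using walk_layer[OF w] by blast
  qed
qed

lemma arith8:
  fixes e d :: int
  assumes "e \<ge> 2" "e div 2 \<le> d div 2"
  shows "e^2 \<le> 8 * (2 * (d div 2) * (d - d div 2))"
proof -
  define q where "q = e div 2"
  define p where "p = d div 2"
  have q1: "q \<ge> 1" using assms(1) unfolding q_def by simp
  have e4: "e \<le> 4 * q" using assms(1) unfolding q_def by linarith
  have pq: "q \<le> p" using assms(2) unfolding q_def p_def .
  have dp: "p \<le> d - p" unfolding p_def by linarith
  have "e^2 \<le> (4*q)^2" using e4 assms(1) by (intro power_mono) auto
  also have "\<dots> = 16 * (q*q)" by (simp add: power2_eq_square)
  also have "\<dots> \<le> 16 * (p*p)" using pq q1 by (intro mult_left_mono mult_mono) auto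
  also have "\<dots> \<le> 16 * (p*(d-p))" using dp pq q1 by (intro mult_left_mono) auto
  finally show ?thesis unfolding p_def by simp
qed

lemma key:
  assumes G: "is_graph V E" and NB: "nbr_order V E nb" and VA: "valid_accept V nb l acc"
    and u0: "u0 \<in> V"
    and eps: "e = Min (l ` layer E u0 j) - Min (l ` layer E u0 (Suc j))" and e2: "e \<ge> 2"
  shows "\<exists>t\<in>V. l t = Min (l ` layer E u0 (Suc j)) \<and>
     e^2 \<le> 8 * (case acc t of Some w \<Rightarrow> 2 * pval l w t * (l w - l t - pval l w t) | None \<Rightarrow> 0)"
proof -
  define A where "A = layer E u0 j"
  define B where "B = layer E u0 (Suc j)"
  have fin: "finite V" using G unfolding is_graph_def by auto
  have AV: "A \<subseteq> V" unfolding A_def by (rule layer_sub[OF G u0])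
  have BV: "B \<subseteq> V" unfolding B_def by (rule layer_sub[OF G u0])
  have finA: "finite A" and finB: "finite B" using AV BV fin finite_subset by auto
  have Bne: "B \<noteq> {}" unfolding B_def using layer_ne[of u0 E "Suc j"] by auto
  have "Min (l ` B) \<in> l ` B" using Min_in[of "l ` B"] finB Bne by auto
  then obtain y where y: "y \<in> B" "l y = Min (l ` B)" by auto
  have "y \<notin> A"
  proof
    assume "y \<in> A"
    hence "Min (l ` A) \<le> l y" using finA by simp
    thus False using e2 y(2) unfolding eps A_def B_def by simp
  qed
  then obtain z where z: "z \<in> A" "E z y" using y(1) unfolding B_def A_def by auto
  have zV: "z \<in> V" using z AV by auto
  have lz: "Min (l ` A) \<le> l z" using z finA by simp
  have yn: "y \<in> set (nb z)" using NB zV z(2) unfolding nbr_order_def by auto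
  have lyz: "l y \<le> l z - 2" using lz y(2) e2 unfolding eps A_def B_def by simp
  obtain t where t: "target nb l z = Some t" using target_exists[of y nb z l, OF yn lyz] by auto
  have ts: "t \<in> set (nb z)" "l t \<le> l y" using target_some[OF t] yn by auto
  have Ezt: "E z t" using NB zV ts(1) unfolding nbr_order_def by auto
  hence tV: "t \<in> V" using G unfolding is_graph_def by auto
  have "t \<in> B" unfolding B_def using z(1) Ezt unfolding A_def by auto
  hence "Min (l ` B) \<le> l t" using finB by simp
  hence lt: "l t = Min (l ` B)" using ts(2) y(2) by simp
  have "acc t \<noteq> None" using VA tV zV t unfolding valid_accept_def by blast
  then obtain w where w: "acc t = Some w" by auto
  have pw: "pval l z t \<le> pval l w t" using VA tV zV t w unfolding valid_accept_def by blast
  have "e \<le> l z - l t" using lz lt unfolding eps A_def B_def by simp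
  hence "e div 2 \<le> (l z - l t) div 2" by (rule zdiv_mono1) simp
  hence "e div 2 \<le> (l w - l t) div 2" using pw by (simp add: pval_div)
  from arith8[OF e2 this]
  have "e^2 \<le> 8 * (2 * pval l w t * (l w - l t - pval l w t))" by (simp add: pval_div)
  thus ?thesis using tV lt w unfolding B_def by auto
qed

theorem lemma5:
  fixes V :: "'a set" and E :: "'a \<Rightarrow> 'a \<Rightarrow> bool" and nb :: "'a \<Rightarrow> 'a list"
    and l :: "'a \<Rightarrow> int" and acc :: "'a \<Rightarrow> 'a option"
  assumes "is_graph V E" and "connected_graph V E" and "card V \<ge> 2"
    and "nbr_order V E nb"
    and "\<forall>u\<in>V. l u \<ge> 0"
    and "valid_accept V nb l acc"
    and "discrepancy V l \<ge> 2 * int (diameter V E)"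
  shows "potential V l - potential V (round_step nb l acc)
           \<ge> real_of_int (discrepancy V l) ^ 2 / (8 * real (diameter V E))"
proof -
  note G = assms(1) and C = assms(2) and NB = assms(4) and VA = assms(6)
  have fin: "finite V" using G unfolding is_graph_def by auto
  have Vne: "V \<noteq> {}" using assms(3) by auto
  define l' where "l' = round_step nb l acc"
  define h where "h = (\<lambda>v. case acc v of Some w \<Rightarrow> 2 * pval l w v * (l w - l v - pval l w v) | None \<Rightarrow> 0)"
  have d1: "(\<Sum>x\<in>V. l' x) = (\<Sum>x\<in>V. l x)" unfolding l'_def by (rule decrease(1)[OF G NB VA])
  have d2: "(\<Sum>x\<in>V. (l' x)^2) + (\<Sum>v\<in>V. h v) \<le> (\<Sum>x\<in>V. (l x)^2)"
    unfolding l'_def h_def by (rule decrease(2)[OF G NB VA])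
  have hnn: "h v \<ge> 0" if "v \<in> V" for v
  proof (cases "acc v")
    case (Some w)
    then have "target nb l w = Some v" using acc_target[OF VA that] by auto
    then have "l v \<le> l w - 2" using target_some by fastforce
    thus ?thesis unfolding h_def Some by (simp add: pval_div)
  qed (simp add: h_def)
  have pot: "potential V l - potential V l' \<ge> real_of_int (\<Sum>v\<in>V. h v)"
  proof -
    have "(\<Sum>v\<in>V. h v) \<le> (\<Sum>x\<in>V. (l x)^2) - (\<Sum>x\<in>V. (l' x)^2)" using d2 by linarith
    hence "real_of_int (\<Sum>v\<in>V. h v) \<le> real_of_int ((\<Sum>x\<in>V. (l x)^2) - (\<Sum>x\<in>V. (l' x)^2))"
      by (simp only: of_int_le_iff)
    thus ?thesis unfolding pot_diff[OF fin d1] .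
  qed
  define D where "D = diameter V E"
  define K where "K = discrepancy V l"
  have main: "real_of_int (\<Sum>v\<in>V. h v) \<ge> (real_of_int K)^2 / (8 * real D)"
  proof (cases "D = 0")
    case True
    have "0 \<le> (\<Sum>v\<in>V. h v)" using sum_nonneg[of V h] hnn by simp
    hence "0 \<le> real_of_int (\<Sum>v\<in>V. h v)" by (simp only: of_int_0_le_iff)
    thus ?thesis using True by simp
  next
    case False
    have "Max (l ` V) \<in> l ` V" using fin Vne by simp
    then obtain u0 where u0: "u0 \<in> V" "l u0 = Max (l ` V)" by auto
    define m where "m j = Min (l ` layer E u0 j)" for j
    have finN: "finite (layer E u0 j)" for j using layer_sub[OF G u0(1)] fin finite_subset by blast
    have neN: "layer E u0 j \<noteq> {}" for j using layer_ne[of u0 E j] by auto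
    have m0: "m 0 = Max (l ` V)" unfolding m_def using u0 by simp
    have mD: "m D = Min (l ` V)" unfolding m_def D_def using layer_all[OF G C u0(1)] by simp
    have manti: "m j \<le> m i" if "i \<le> j" for i j
      unfolding m_def using layer_mono[OF that, of E u0] finN neN
      by (intro Min_antimono) auto
    define eps where "eps j = m j - m (Suc j)" for j
    have epsnn: "eps j \<ge> 0" for j unfolding eps_def using manti[of j "Suc j"] by simp
    have sumeps: "(\<Sum>j<D. eps j) = K"
      unfolding eps_def K_def discrepancy_def using sum_lessThan_telescope'[of m D] m0 mD by simp
    have ex: "\<exists>t\<in>V. l t = m (Suc j) \<and> (eps j)^2 \<le> 8 * h t" if "eps j \<ge> 2" for j
      using key[OF G NB VA u0(1) _ that, of j] unfolding eps_def m_def h_def by simp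
    define tt where "tt j = (SOME t. t \<in> V \<and> l t = m (Suc j) \<and> (eps j)^2 \<le> 8 * h t)" for j
    have tt: "tt j \<in> V \<and> l (tt j) = m (Suc j) \<and> (eps j)^2 \<le> 8 * h (tt j)" if "eps j \<ge> 2" for j
      unfolding tt_def using someI_ex[OF ex[OF that, unfolded Bex_def]] .
    define J where "J = {j. j < D \<and> eps j \<ge> 2}"
    have finJ: "finite J" unfolding J_def by simp
    have inj: "inj_on tt J"
    proof (rule inj_onI)
      fix i j assume ij: "i \<in> J" "j \<in> J" "tt i = tt j"
      have "m (Suc i) = m (Suc j)" using tt ij unfolding J_def by (metis (mono_tags, lifting) mem_Collect_eq)
      moreover have "m (Suc j) < m (Suc i)" if "i < j" "eps j \<ge> 2" for i j :: nat
      proof -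
        have "m j \<le> m (Suc i)" using manti[of "Suc i" j] that by simp
        thus ?thesis using that(2) unfolding eps_def by simp
      qed
      ultimately show "i = j" using ij unfolding J_def
        by (metis (mono_tags, lifting) linorder_neqE_nat mem_Collect_eq order_less_irrefl)
    qed
    have ttV: "tt ` J \<subseteq> V" using tt unfolding J_def by auto
    have "(\<Sum>j\<in>J. h (tt j)) = (\<Sum>v\<in>tt ` J. h v)" using sum.reindex[OF inj, of h] by (simp add: comp_def)
    also have "\<dots> \<le> (\<Sum>v\<in>V. h v)" using sum_mono2[OF fin ttV] hnn by auto
    finally have s1: "(\<Sum>j\<in>J. h (tt j)) \<le> (\<Sum>v\<in>V. h v)" .
    have "(\<Sum>j\<in>J. (eps j)^2) \<le> (\<Sum>j\<in>J. 8 * h (tt j))"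
      using tt unfolding J_def by (intro sum_mono) auto
    hence s2: "(\<Sum>j\<in>J. (eps j)^2) \<le> 8 * (\<Sum>v\<in>V. h v)" using s1 by (simp add: sum_distrib_left[symmetric])
    define f where "f j = (if eps j \<ge> 2 then (eps j)^2 else 0)" for j
    have s3: "(\<Sum>j\<in>J. (eps j)^2) = (\<Sum>j<D. f j)"
      unfolding J_def f_def using sum.inter_filter[of "{..<D}" "\<lambda>j. (eps j)^2" "\<lambda>j. eps j \<ge> 2"]
      by (simp add: lessThan_def)
    have Dpos: "real D > 0" using False by simp
    have K2: "real_of_int K \<ge> 2 * real D" using assms(7) unfolding K_def D_def by linarith
    define a where "a = real_of_int K / real D"
    have a2: "a \<ge> 2" unfolding a_def using K2 Dpos by (simp add: field_simps)
    have pw: "real_of_int (f j) \<ge> 2 * a * real_of_int (eps j) - a^2" for j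
    proof (cases "eps j \<ge> 2")
      case True
      have "0 \<le> (real_of_int (eps j) - a)^2" by simp
      thus ?thesis using True unfolding f_def by (simp add: power2_eq_square algebra_simps)
    next
      case False
      hence "eps j = 0 \<or> eps j = 1" using epsnn[of j] by auto
      moreover have "2 * a - a^2 \<le> 0" using a2 by (simp add: power2_eq_square)
      ultimately show ?thesis using False unfolding f_def by auto
    qed
    have "(\<Sum>j<D. 2 * a * real_of_int (eps j) - a^2) \<le> (\<Sum>j<D. real_of_int (f j))"
      by (rule sum_mono) (rule pw)
    moreover have "(\<Sum>j<D. 2 * a * real_of_int (eps j) - a^2) = 2 * a * real_of_int K - real D * a^2"
      using sumeps by (simp add: sum_subtractf sum_distrib_left[symmetric] flip: of_int_sum)
    moreover have "2 * a * real_of_int K - real D * a^2 = (real_of_int K)^2 / real D"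
      unfolding a_def using Dpos by (simp add: field_simps power2_eq_square)
    ultimately have "(real_of_int K)^2 / real D \<le> real_of_int (\<Sum>j<D. f j)" by (simp add: of_int_sum)
    also have "\<dots> \<le> 8 * real_of_int (\<Sum>v\<in>V. h v)" using s2 s3 by (metis of_int_le_iff of_int_mult of_int_numeral)
    finally show ?thesis using Dpos by (simp add: field_simps)
  qed
  show ?thesis using pot main unfolding l'_def K_def D_def by linarith
qed

end
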